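(* For all $f,g\in\mathrm{Mult}[[B]]$, $$f\boxtimes g=g\circ(f\boxtimes_1 g),\qquad g\,\underline{\boxtimes}\,f=f\circ\big((f\boxtimes_2 g)\cdot I\big).$$
   Context: $B$ is a unital algebra over a field $\mathbb K$ of characteristic zero. $\mathrm{Mult}[[B]]$: sequences $f=(f_n)_{n\ge0}$ of multilinear maps $f_n:B^n\to B$. Product $(f\cdot g)_n(x_1,\dots,x_n)=\sum_{k=0}^n f_k(x_1,\dots,x_k)g_{n-k}(x_{k+1},\dots,x_n)$; for $g_0=0$, composition $(f\circ g)_n(x_1,\dots,x_n)=\sum_{l\ge0}\sum_{k_1+\dots+k_l=n,k_i\ge1}f_l(g_{k_1}(x_1,\dots,x_{k_1}),\dots,g_{k_l}(x_{n-k_l+1},\dots,x_n))$; $I=(\delta_{n,1}\mathrm{id}_B)$. Planar binary trees: $Y_0=\{|\}$, $Y_n=\{\sigma\vee\tau:\sigma\in Y_k,\tau\in Y_l,k+l=n-1\}$ ($\sigma\vee\tau$: root with left subtree $\sigma$, right subtree $\tau$); each $\tau\in Y_n$, $n\ge1$, is uniquely $\tau_1\vee(\tau_2\vee(\cdots\vee(\tau_k\vee|)))$; $j_i=|\tau_1|+\dots+|\tau_i|+i$. For $f,g\in\mathrm{Mult}[[B]]$: $(f\cup g)_|=1$, $(f\cup g)_\tau(x_1,\dots,x_n)=g_k((g\cup f)_{\tau_1}(x_1,\dots,x_{j_1-1})x_{j_1},\dots,(g\cup f)_{\tau_k}(x_{j_{k-1}+1},\dots,x_{j_k-1})x_{j_k})$.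 $R:Y\to Y$: $R(|)=|$, $R(\sigma\vee\tau)=(|\vee R(\sigma))\vee R(\tau)$. Boxed convolutions (for $n\ge1$): $(f\boxtimes g)_n(x_1,\dots,x_n)=\sum_{\tau\in Y_n}(f\cup g)_{R(\tau)}(x_1,1,x_2,1,\dots,x_n,1)$, $(f\boxtimes g)_0=g_0$; $(f\underline\boxtimes g)_n(x_1,\dots,x_n)=\sum_{\tau\in Y_n}(f\cup g)_{R(\tau)}(1,x_1,1,x_2,\dots,1,x_n)$, $(f\underline\boxtimes g)_0=g_0$; $(f\boxtimes_1 g)_n(x_1,\dots,x_n)=\sum_{\tau\in Y_{n-1}}(g\cup f)_{|\vee R(\tau)}(x_1,1,x_2,1,\dots,1,x_n)$, $(f\boxtimes_1 g)_0=0$; $(f\boxtimes_2 g)_n(x_1,\dots,x_n)=\sum_{\tau\in Y_n}(f\cup g)_{|\vee R(\tau)}(1,x_1,1,x_2,\dots,1,x_n,1)$, $(f\boxtimes_2 g)_0=g_1(1)$. *)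

theory Defs
  imports Main
begin

text \<open>Elements of Mult[[B]] are represented as f :: nat => 'b list => 'b, where f n is the
  n-ary component, applied to argument lists of length n (values on other lengths are irrelevant).\<close>

type_synonym 'b mult = "nat \<Rightarrow> 'b list \<Rightarrow> 'b"

definition is_algebra :: "('k::field_char_0 \<Rightarrow> 'b::ring_1 \<Rightarrow> 'b) \<Rightarrow> bool" where
  "is_algebra scal \<longleftrightarrow>
     (\<forall>a b x. scal a (scal b x) = scal (a * b) x) \<and> (\<forall>x. scal 1 x = x) \<and>
     (\<forall>a b x. scal (a + b) x = scal a x + scal b x) \<and>
     (\<forall>a x y. scal a (x + y) = scal a x + scal a y) \<and>
     (\<forall>a x y. scal a (x * y) = scal a x * y) \<and>
     (\<forall>a x y. scal a (x * y) = x * scal a y)"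

definition multilinear :: "('k \<Rightarrow> 'b::ring_1 \<Rightarrow> 'b) \<Rightarrow> nat \<Rightarrow> ('b list \<Rightarrow> 'b) \<Rightarrow> bool" where
  "multilinear scal n h \<longleftrightarrow>
     (\<forall>xs ys y z. length xs + length ys + 1 = n \<longrightarrow>
        h (xs @ (y + z) # ys) = h (xs @ y # ys) + h (xs @ z # ys)) \<and>
     (\<forall>xs ys a y. length xs + length ys + 1 = n \<longrightarrow>
        h (xs @ scal a y # ys) = scal a (h (xs @ y # ys)))"

definition in_Mult :: "('k \<Rightarrow> 'b::ring_1 \<Rightarrow> 'b) \<Rightarrow> 'b mult \<Rightarrow> bool" where
  "in_Mult scal f \<longleftrightarrow> (\<forall>n. multilinear scal n (f n))"

definition mprod :: "'b::ring_1 mult \<Rightarrow> 'b mult \<Rightarrow> 'b mult" where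
  "mprod f g n xs = (\<Sum>k=0..n. f k (take k xs) * g (n - k) (drop k xs))"

fun blocks :: "nat list \<Rightarrow> 'a list \<Rightarrow> 'a list list" where
  "blocks [] xs = []"
| "blocks (k # ks) xs = take k xs # blocks ks (drop k xs)"

definition compositions :: "nat \<Rightarrow> nat list set" where
  "compositions n = {ks. (\<forall>k\<in>set ks. 1 \<le> k) \<and> sum_list ks = n}"

text \<open>Composition f o g (intended for g 0 = 0): sum over compositions k_1+...+k_l = n, k_i >= 1.\<close>
definition mcomp :: "'b::ring_1 mult \<Rightarrow> 'b mult \<Rightarrow> 'b mult" where
  "mcomp f g n xs = (\<Sum>ks\<in>compositions n.
      f (length ks) (map (\<lambda>(k, ys). g k ys) (zip ks (blocks ks xs))))"

definition mI :: "'b::ring_1 mult" where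
  "mI n xs = (if n = 1 then hd xs else 0)"

datatype ptree = Leaf | Node ptree ptree

fun nnodes :: "ptree \<Rightarrow> nat" where
  "nnodes Leaf = 0"
| "nnodes (Node l r) = Suc (nnodes l + nnodes r)"

definition Y :: "nat \<Rightarrow> ptree set" where
  "Y n = {t. nnodes t = n}"

fun spine :: "ptree \<Rightarrow> ptree list" where
  "spine Leaf = []"
| "spine (Node l r) = l # spine r"

fun Rt :: "ptree \<Rightarrow> ptree" where
  "Rt Leaf = Leaf"
| "Rt (Node s t) = Node (Node Leaf (Rt s)) (Rt t)"

text \<open>(f cup g)_tau. For tau = tau_1 v (tau_2 v ... (tau_k v |)), cupargs produces the list
  [(g cup f)_{tau_1}(x_1..x_{j_1-1}) x_{j_1}, ..., (g cup f)_{tau_k}(...) x_{j_k}].\<close>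
fun cup :: "'b::ring_1 mult \<Rightarrow> 'b mult \<Rightarrow> ptree \<Rightarrow> 'b list \<Rightarrow> 'b"
and cupargs :: "'b::ring_1 mult \<Rightarrow> 'b mult \<Rightarrow> ptree \<Rightarrow> 'b list \<Rightarrow> 'b list" where
  "cup f g Leaf xs = 1"
| "cup f g (Node l r) xs =
     g (length (spine (Node l r)))
       ((cup g f l (take (nnodes l) xs) * xs ! nnodes l) # cupargs f g r (drop (Suc (nnodes l)) xs))"
| "cupargs f g Leaf xs = []"
| "cupargs f g (Node l r) xs =
     (cup g f l (take (nnodes l) xs) * xs ! nnodes l) # cupargs f g r (drop (Suc (nnodes l)) xs)"

definition inter_r :: "'b::ring_1 list \<Rightarrow> 'b list" where
  "inter_r xs = concat (map (\<lambda>x. [x, 1]) xs)"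

definition inter_l :: "'b::ring_1 list \<Rightarrow> 'b list" where
  "inter_l xs = concat (map (\<lambda>x. [1, x]) xs)"

definition boxtimes :: "'b::ring_1 mult \<Rightarrow> 'b mult \<Rightarrow> 'b mult" where
  "boxtimes f g n xs = (if n = 0 then g 0 []
     else (\<Sum>\<tau>\<in>Y n. cup f g (Rt \<tau>) (inter_r xs)))"

definition boxtimes_u :: "'b::ring_1 mult \<Rightarrow> 'b mult \<Rightarrow> 'b mult" where
  "boxtimes_u f g n xs = (if n = 0 then g 0 []
     else (\<Sum>\<tau>\<in>Y n. cup f g (Rt \<tau>) (inter_l xs)))"

definition boxtimes1 :: "'b::ring_1 mult \<Rightarrow> 'b mult \<Rightarrow> 'b mult" where
  "boxtimes1 f g n xs = (if n = 0 then 0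
     else (\<Sum>\<tau>\<in>Y (n - 1). cup g f (Node Leaf (Rt \<tau>)) (butlast (inter_r xs))))"

definition boxtimes2 :: "'b::ring_1 mult \<Rightarrow> 'b mult \<Rightarrow> 'b mult" where
  "boxtimes2 f g n xs = (if n = 0 then g 1 [1]
     else (\<Sum>\<tau>\<in>Y n. cup f g (Node Leaf (Rt \<tau>)) (inter_l xs @ [1])))"

end

theory Submission
  imports Defs
begin

fun mk :: "ptree list \<Rightarrow> ptree" where
  "mk [] = Leaf" | "mk (l # ls) = Node l (mk ls)"

lemma mk_spine[simp]: "mk (spine t) = t" by (induction t) auto
lemma spine_mk[simp]: "spine (mk ls) = ls" by (induction ls) auto
lemma nnodes_mk: "nnodes (mk ls) = sum_list (map (Suc \<circ> nnodes) ls)" by (induction ls) auto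
lemma nnodes_Rt[simp]: "nnodes (Rt t) = 2 * nnodes t" by (induction t) auto

definition S :: "nat \<Rightarrow> ptree list set" where
  "S n = {ls. sum_list (map (Suc \<circ> nnodes) ls) = n}"

lemma Y_eq: "Y n = mk ` S n"
proof
  show "Y n \<subseteq> mk ` S n"
  proof
    fix t assume "t \<in> Y n"
    then have "spine t \<in> S n" "t = mk (spine t)"
      by (auto simp: Y_def S_def nnodes_mk[symmetric])
    then show "t \<in> mk ` S n" by blast
  qed
  show "mk ` S n \<subseteq> Y n" by (auto simp: Y_def S_def nnodes_mk)
qed

lemma inj_mk: "inj mk" by (metis injI spine_mk)

lemma finite_Y: "finite (Y n)"
proof (induction n rule: less_induct)
  case (less n)
  have "Y n \<subseteq> {Leaf} \<union> (\<lambda>(l,r). Node l r) ` ((\<Union>i<n. Y i) \<times> (\<Union>i<n. Y i))"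
  proof
    fix t assume t: "t \<in> Y n"
    show "t \<in> {Leaf} \<union> (\<lambda>(l,r). Node l r) ` ((\<Union>i<n. Y i) \<times> (\<Union>i<n. Y i))"
    proof (cases t)
      case (Node l r)
      with t have "l \<in> (\<Union>i<n. Y i)" "r \<in> (\<Union>i<n. Y i)" by (auto simp: Y_def)
      then show ?thesis using Node by auto
    qed simp
  qed
  moreover have "finite ((\<Union>i<n. Y i) \<times> (\<Union>i<n. Y i))" using less by auto
  then have "finite ({Leaf} \<union> (\<lambda>(l,r). Node l r) ` ((\<Union>i<n. Y i) \<times> (\<Union>i<n. Y i)))" by simp
  ultimately show ?case by (rule finite_subset)
qed

lemma finite_S: "finite (S n)"
proof -
  have "S n = spine ` Y n" using Y_eq by (simp add: image_image)
  then show ?thesis using finite_Y by simp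
qed

lemma length_le_sum: "\<forall>k\<in>set ks. 1 \<le> k \<Longrightarrow> length ks \<le> sum_list (ks::nat list)"
  by (induction ks) auto

lemma finite_comp: "finite (compositions n)"
proof -
  have "compositions n \<subseteq> {ks. set ks \<subseteq> {0..n} \<and> length ks \<le> n}"
  proof
    fix ks assume "ks \<in> compositions n"
    then have a: "\<forall>k\<in>set ks. 1 \<le> k" and b: "sum_list ks = n" by (auto simp: compositions_def)
    have "set ks \<subseteq> {0..n}" using b member_le_sum_list by fastforce
    moreover have "length ks \<le> n" using length_le_sum[OF a] b by simp
    ultimately show "ks \<in> {ks. set ks \<subseteq> {0..n} \<and> length ks \<le> n}" by simp
  qed
  then show ?thesis by (rule finite_subset) (rule finite_lists_length_le, simp)
qed

lemma length_blocks[simp]: "length (blocks ks xs) = length ks"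
  by (induction ks arbitrary: xs) auto

lemma blocks_len: "sum_list ks = length xs \<Longrightarrow> (k, ys) \<in> set (zip ks (blocks ks xs)) \<Longrightarrow> length ys = k"
proof (induction ks arbitrary: xs)
  case (Cons a ks)
  show ?case
  proof (cases "(k, ys) = (a, take a xs)")
    case True then show ?thesis using Cons.prems by auto
  next
    case False
    then have "(k, ys) \<in> set (zip ks (blocks ks (drop a xs)))" using Cons.prems by auto
    moreover have "sum_list ks = length (drop a xs)" using Cons.prems by auto
    ultimately show ?thesis using Cons.IH by blast
  qed
qed simp

lemma take_inter_r: "j < length xs \<Longrightarrow> take (Suc (2*j)) (inter_r xs) = butlast (inter_r (take (Suc j) xs))"
  by (induction j arbitrary: xs; case_tac xs) (auto simp: inter_r_def nth_Cons')
lemma nth_inter_r: "j < length xs \<Longrightarrow> inter_r xs ! Suc (2*j) = 1"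
  by (induction j arbitrary: xs; case_tac xs) (auto simp: inter_r_def nth_Cons')
lemma drop_inter_r: "drop (Suc (Suc (2*j))) (inter_r xs) = inter_r (drop (Suc j) xs)"
  by (induction j arbitrary: xs; case_tac xs) (auto simp: inter_r_def nth_Cons')
lemma take_inter_l: "j < length xs \<Longrightarrow> take (Suc (2*j)) (inter_l xs) = inter_l (take j xs) @ [1]"
  by (induction j arbitrary: xs; case_tac xs) (auto simp: inter_l_def nth_Cons')
lemma nth_inter_l: "j < length xs \<Longrightarrow> inter_l xs ! Suc (2*j) = xs ! j"
  by (induction j arbitrary: xs; case_tac xs) (auto simp: inter_l_def nth_Cons')
lemma drop_inter_l: "drop (Suc (Suc (2*j))) (inter_l xs) = inter_l (drop (Suc j) xs)"
  by (induction j arbitrary: xs; case_tac xs) (auto simp: inter_l_def nth_Cons')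


lemma h_zero:
  fixes h :: "'b::ring_1 list \<Rightarrow> 'b"
  assumes "h (pre @ (0+0) # post) = h (pre @ 0 # post) + h (pre @ 0 # post)"
  shows "h (pre @ 0 # post) = 0"
  using assms by simp

lemma h_sum:
  fixes h :: "'b::ring_1 list \<Rightarrow> 'b"
  assumes add: "\<And>y z. h (pre @ (y+z) # post) = h (pre @ y # post) + h (pre @ z # post)"
  and fin: "finite A"
  shows "h (pre @ (\<Sum>a\<in>A. F a) # post) = (\<Sum>a\<in>A. h (pre @ F a # post))"
  using fin
proof (induction A rule: finite_induct)
  case empty then show ?case using h_zero[OF add] by simp
next
  case (insert x A) then show ?case using add by simp
qed

lemma ml:
  fixes h :: "'b::ring_1 list \<Rightarrow> 'b"
  assumes add: "\<And>pre post y z. length pre + length post + 1 = m \<Longrightarrow>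
      h (pre @ (y+z) # post) = h (pre @ y # post) + h (pre @ z # post)"
  and fin: "\<And>i. i \<in> set js \<Longrightarrow> finite (A i)"
  and len: "length pre + length js = m"
  shows "h (pre @ map (\<lambda>i. \<Sum>a\<in>A i. F i a) js) =
         (\<Sum>as\<in>{as. list_all2 (\<lambda>a i. a \<in> A i) as js}. h (pre @ map2 F js as))"
  using fin len
proof (induction js arbitrary: pre)
  case Nil
  have "{as. list_all2 (\<lambda>a i. a \<in> A i) as []} = {[]}" by auto
  then show ?case by simp
next
  case (Cons i js)
  let ?L = "\<lambda>js. {as. list_all2 (\<lambda>a i. a \<in> A i) as js}"
  have "h (pre @ map (\<lambda>i. \<Sum>a\<in>A i. F i a) (i # js)) =
        h (pre @ (\<Sum>a\<in>A i. F i a) # map (\<lambda>i. \<Sum>a\<in>A i. F i a) js)" by simp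
  also have "\<dots> = (\<Sum>a\<in>A i. h (pre @ F i a # map (\<lambda>i. \<Sum>a\<in>A i. F i a) js))"
    by (rule h_sum) (use add Cons.prems in auto)
  also have "\<dots> = (\<Sum>a\<in>A i. \<Sum>as\<in>?L js. h ((pre @ [F i a]) @ map2 F js as))"
  proof (rule sum.cong[OF refl])
    fix a
    have "h ((pre @ [F i a]) @ map (\<lambda>i. \<Sum>a\<in>A i. F i a) js) = (\<Sum>as\<in>?L js. h ((pre @ [F i a]) @ map2 F js as))"
      by (rule Cons.IH) (use Cons.prems in auto)
    then show "h (pre @ F i a # map (\<lambda>i. \<Sum>a\<in>A i. F i a) js) = (\<Sum>as\<in>?L js. h ((pre @ [F i a]) @ map2 F js as))"
      by simp
  qed
  also have "\<dots> = (\<Sum>(a,as)\<in>A i \<times> ?L js. h (pre @ map2 F (i # js) (a # as)))"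
    by (simp add: sum.cartesian_product)
  also have "\<dots> = (\<Sum>as\<in>?L (i # js). h (pre @ map2 F (i # js) as))"
  proof -
    have "bij_betw (\<lambda>(a,as). a # as) (A i \<times> ?L js) (?L (i # js))"
      by (rule bij_betw_byWitness[where f' = "\<lambda>l. (hd l, tl l)"]) (auto simp: list_all2_Cons2)
    from sum.reindex_bij_betw[OF this, of "\<lambda>as. h (pre @ map2 F (i # js) as)"]
    show ?thesis by (simp add: case_prod_beta')
  qed
  finally show ?case .
qed

lemma length_spine_Rt[simp]: "length (spine (Rt t)) = length (spine t)"
  by (induction t) auto

lemma cup_Node: "cup f g (Node l r) xs = g (length (spine (Node l r))) (cupargs f g (Node l r) xs)"
  by simp

lemma generic:
  fixes h :: "nat \<Rightarrow> 'b::ring_1 list \<Rightarrow> 'b"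
  assumes add: "\<And>m pre post y z. length pre + length post + 1 = m \<Longrightarrow>
      h m (pre @ (y+z) # post) = h m (pre @ y # post) + h m (pre @ z # post)"
  and eq: "\<And>ls. ls \<in> S n \<Longrightarrow> P (mk ls) =
      h (length ls) (map2 F (zip (map (Suc \<circ> nnodes) ls) (blocks (map (Suc \<circ> nnodes) ls) xs)) ls)"
  shows "(\<Sum>\<tau>\<in>Y n. P \<tau>) = (\<Sum>ks\<in>compositions n.
      h (length ks) (map (\<lambda>p. \<Sum>a\<in>Y (fst p - 1). F p a) (zip ks (blocks ks xs))))"
proof -
  let ?K = "map (Suc \<circ> nnodes)"
  let ?L = "\<lambda>ks. {as. list_all2 (\<lambda>a p. a \<in> Y (fst p - 1)) as (zip ks (blocks ks xs))}"
  have "(\<Sum>\<tau>\<in>Y n. P \<tau>) = (\<Sum>ls\<in>S n. P (mk ls))"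
    unfolding Y_eq by (simp add: sum.reindex[OF inj_on_subset[OF inj_mk subset_UNIV]])
  also have "\<dots> = (\<Sum>ls\<in>S n. h (length ls) (map2 F (zip (?K ls) (blocks (?K ls) xs)) ls))"
    using eq by (rule sum.cong[OF refl])
  also have "\<dots> = (\<Sum>ks\<in>compositions n. \<Sum>ls\<in>{ls. ls \<in> S n \<and> ?K ls = ks}.
       h (length ls) (map2 F (zip (?K ls) (blocks (?K ls) xs)) ls))"
    by (rule sum.group[symmetric]) (use finite_S finite_comp in \<open>auto simp: S_def compositions_def\<close>)
  also have "\<dots> = (\<Sum>ks\<in>compositions n. \<Sum>ls\<in>?L ks.
       h (length ks) (map2 F (zip ks (blocks ks xs)) ls))"
  proof (rule sum.cong[OF refl])
    fix ks assume ks: "ks \<in> compositions n"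
    have seteq: "{ls. ls \<in> S n \<and> ?K ls = ks} = ?L ks"
    proof (intro set_eqI iffI)
      fix ls assume "ls \<in> {ls. ls \<in> S n \<and> ?K ls = ks}"
      then have "?K ls = ks" by simp
      then show "ls \<in> ?L ks"
        by (auto simp: list_all2_conv_all_nth Y_def)
    next
      fix ls assume "ls \<in> ?L ks"
      then have l: "length ls = length ks" and i: "\<And>i. i < length ks \<Longrightarrow> nnodes (ls ! i) = ks ! i - 1"
        by (auto simp: list_all2_conv_all_nth Y_def)
      have "\<And>i. i < length ks \<Longrightarrow> 1 \<le> ks ! i" using ks by (auto simp: compositions_def)
      then have s1: "\<And>i. i < length ks \<Longrightarrow> Suc (ks ! i - 1) = ks ! i"
        by (metis One_nat_def Suc_pred le_simps(3))
      have "?K ls = ks" using l i s1 by (intro nth_equalityI) auto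
      then show "ls \<in> {ls. ls \<in> S n \<and> ?K ls = ks}" using ks by (auto simp: S_def compositions_def)
    qed
    show "(\<Sum>ls\<in>{ls. ls \<in> S n \<and> ?K ls = ks}. h (length ls) (map2 F (zip (?K ls) (blocks (?K ls) xs)) ls)) =
        (\<Sum>ls\<in>?L ks. h (length ks) (map2 F (zip ks (blocks ks xs)) ls))"
    proof (rule sum.cong[OF seteq])
      fix ls assume "ls \<in> ?L ks"
      then have "?K ls = ks" using seteq by blast
      then show "h (length ls) (map2 F (zip (?K ls) (blocks (?K ls) xs)) ls) =
          h (length ks) (map2 F (zip ks (blocks ks xs)) ls)" by (metis length_map)
    qed
  qed
  also have "\<dots> = (\<Sum>ks\<in>compositions n.
      h (length ks) (map (\<lambda>p. \<Sum>a\<in>Y (fst p - 1). F p a) (zip ks (blocks ks xs))))"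
  proof (rule sum.cong[OF refl])
    fix ks
    show "(\<Sum>ls\<in>?L ks. h (length ks) (map2 F (zip ks (blocks ks xs)) ls)) =
        h (length ks) (map (\<lambda>p. \<Sum>a\<in>Y (fst p - 1). F p a) (zip ks (blocks ks xs)))"
      using ml[where h = "h (length ks)" and m = "length ks" and pre = "[]" and A = "\<lambda>p. Y (fst p - 1)"
          and js = "zip ks (blocks ks xs)" and F = F] add
      by (simp add: finite_Y)
  qed
  finally show ?thesis .
qed


lemma cupargs_r: "length xs = sum_list (map (Suc \<circ> nnodes) ls) \<Longrightarrow>
  cupargs f g (Rt (mk ls)) (inter_r xs) =
  map2 (\<lambda>p l. cup g f (Node Leaf (Rt l)) (butlast (inter_r (snd p))))
    (zip (map (Suc \<circ> nnodes) ls) (blocks (map (Suc \<circ> nnodes) ls) xs)) ls"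
proof (induction ls arbitrary: xs)
  case Nil then show ?case by simp
next
  case (Cons l ls)
  then have lt: "nnodes l < length xs" by simp
  have "length (drop (Suc (nnodes l)) xs) = sum_list (map (Suc \<circ> nnodes) ls)" using Cons.prems by (simp add: o_def)
  note IH = Cons.IH[OF this]
  show ?case using lt IH by (simp add: take_inter_r nth_inter_r drop_inter_r)
qed

lemma cupargs_l: "length xs = sum_list (map (Suc \<circ> nnodes) ls) \<Longrightarrow>
  cupargs g f (Rt (mk ls)) (inter_l xs) =
  map2 (\<lambda>p l. cup f g (Node Leaf (Rt l)) (inter_l (take (fst p - 1) (snd p)) @ [1]) * snd p ! (fst p - 1))
    (zip (map (Suc \<circ> nnodes) ls) (blocks (map (Suc \<circ> nnodes) ls) xs)) ls"
proof (induction ls arbitrary: xs)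
  case Nil then show ?case by simp
next
  case (Cons l ls)
  then have lt: "nnodes l < length xs" by simp
  have "length (drop (Suc (nnodes l)) xs) = sum_list (map (Suc \<circ> nnodes) ls)" using Cons.prems by (simp add: o_def)
  note IH = Cons.IH[OF this]
  show ?case using lt IH by (simp add: take_inter_l nth_inter_l drop_inter_l min_def)
qed

lemma Y0: "Y 0 = {Leaf}"
  by (auto simp: Y_def elim: nnodes.elims)

lemma inter_l_Nil[simp]: "inter_l [] = []" by (simp add: inter_l_def)

lemma boxtimes2_eq: "length zs = m \<Longrightarrow> boxtimes2 f g m zs = (\<Sum>a\<in>Y m. cup f g (Node Leaf (Rt a)) (inter_l zs @ [1]))"
  by (cases m) (auto simp: boxtimes2_def Y0)

lemma mprod_mI: "1 \<le> k \<Longrightarrow> length ys = k \<Longrightarrow> mprod B mI k ys = B (k-1) (take (k-1) ys) * ys ! (k-1)"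
proof -
  assume k: "1 \<le> k" and l: "length ys = k"
  have "mprod B mI k ys = (\<Sum>j=0..k. if j = k - 1 then B j (take j ys) * hd (drop j ys) else 0)"
    unfolding mprod_def mI_def
    by (rule sum.cong) (use k in auto)
  also have "\<dots> = B (k-1) (take (k-1) ys) * hd (drop (k-1) ys)"
    by (simp add: sum.delta)
  also have "hd (drop (k-1) ys) = ys ! (k-1)" using k l by (simp add: hd_drop_conv_nth)
  finally show ?thesis .
qed


lemma comp0: "compositions 0 = {[]}"
proof -
  have "ks = []" if "ks \<in> compositions 0" for ks
    using that by (cases ks) (auto simp: compositions_def)
  then show ?thesis by (auto simp: compositions_def)
qed

lemma S_nonempty: "ls \<in> S n \<Longrightarrow> n \<noteq> 0 \<Longrightarrow> \<exists>l ls'. ls = l # ls'"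
  by (cases ls) (auto simp: S_def)

theorem lemma3:
  fixes scal :: "'k::field_char_0 \<Rightarrow> 'b::ring_1 \<Rightarrow> 'b"
    and f g :: "'b mult"
  assumes "is_algebra scal"
    and "in_Mult scal f"
    and "in_Mult scal g"
  shows "(\<forall>n xs. length xs = n \<longrightarrow>
            boxtimes f g n xs = mcomp g (boxtimes1 f g) n xs) \<and>
         (\<forall>n xs. length xs = n \<longrightarrow>
            boxtimes_u g f n xs = mcomp f (mprod (boxtimes2 f g) mI) n xs)"
proof -
  have addf: "\<And>m pre post y z. length pre + length post + 1 = m \<Longrightarrow>
      f m (pre @ (y+z) # post) = f m (pre @ y # post) + f m (pre @ z # post)"
    using assms(2) by (simp add: in_Mult_def multilinear_def)
  have addg: "\<And>m pre post y z. length pre + length post + 1 = m \<Longrightarrow>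
      g m (pre @ (y+z) # post) = g m (pre @ y # post) + g m (pre @ z # post)"
    using assms(3) by (simp add: in_Mult_def multilinear_def)
  have P1: "boxtimes f g n xs = mcomp g (boxtimes1 f g) n xs" if len: "length xs = n" for n xs
  proof (cases "n = 0")
    case True then show ?thesis by (simp add: boxtimes_def mcomp_def comp0)
  next
    case False
    define F1 where "F1 = (\<lambda>(p::nat \<times> 'b list) l. cup g f (Node Leaf (Rt l)) (butlast (inter_r (snd p))))"
    have "boxtimes f g n xs = (\<Sum>\<tau>\<in>Y n. cup f g (Rt \<tau>) (inter_r xs))" using False by (simp add: boxtimes_def)
    also have "\<dots> = (\<Sum>ks\<in>compositions n.
        g (length ks) (map (\<lambda>p. \<Sum>a\<in>Y (fst p - 1). F1 p a) (zip ks (blocks ks xs))))"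
    proof (rule generic[where h = g and F = F1])
      show "\<And>m pre post y z. length pre + length post + 1 = m \<Longrightarrow>
        g m (pre @ (y+z) # post) = g m (pre @ y # post) + g m (pre @ z # post)" by (rule addg)
    next
      fix ls assume ls: "ls \<in> S n"
      then obtain l ls' where lsd: "ls = l # ls'" using S_nonempty False by blast
      have lx: "length xs = sum_list (map (Suc \<circ> nnodes) ls)" using ls len by (simp add: S_def)
      have "cup f g (Rt (mk ls)) (inter_r xs) = g (length ls) (cupargs f g (Rt (mk ls)) (inter_r xs))"
        using lsd by simp
      then show "cup f g (Rt (mk ls)) (inter_r xs) =
          g (length ls) (map2 F1 (zip (map (Suc \<circ> nnodes) ls) (blocks (map (Suc \<circ> nnodes) ls) xs)) ls)"
        using cupargs_r[OF lx, of f g] by (simp add: F1_def)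
    qed
    also have "\<dots> = mcomp g (boxtimes1 f g) n xs"
      unfolding mcomp_def
    proof (rule sum.cong[OF refl])
      fix ks assume ks: "ks \<in> compositions n"
      have "map (\<lambda>p. \<Sum>a\<in>Y (fst p - 1). F1 p a) (zip ks (blocks ks xs)) =
            map (\<lambda>(k, ys). boxtimes1 f g k ys) (zip ks (blocks ks xs))"
      proof (rule map_cong[OF refl])
        fix p assume p: "p \<in> set (zip ks (blocks ks xs))"
        obtain k ys where pk: "p = (k, ys)" by fastforce
        have "k \<in> set ks" using p pk by (auto dest: set_zip_leftD)
        then have "k \<noteq> 0" using ks by (auto simp: compositions_def)
        then show "(\<Sum>a\<in>Y (fst p - 1). F1 p a) = (case p of (k, ys) \<Rightarrow> boxtimes1 f g k ys)"
          using pk by (simp add: boxtimes1_def F1_def)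
      qed
      then show "g (length ks) (map (\<lambda>p. \<Sum>a\<in>Y (fst p - 1). F1 p a) (zip ks (blocks ks xs))) =
          g (length ks) (map (\<lambda>(k, ys). boxtimes1 f g k ys) (zip ks (blocks ks xs)))" by (rule arg_cong)
    qed
    finally show ?thesis .
  qed
  have P2: "boxtimes_u g f n xs = mcomp f (mprod (boxtimes2 f g) mI) n xs" if len: "length xs = n" for n xs
  proof (cases "n = 0")
    case True then show ?thesis by (simp add: boxtimes_u_def mcomp_def comp0)
  next
    case False
    define F2 where "F2 = (\<lambda>(p::nat \<times> 'b list) l.
       cup f g (Node Leaf (Rt l)) (inter_l (take (fst p - 1) (snd p)) @ [1]) * snd p ! (fst p - 1))"
    have "boxtimes_u g f n xs = (\<Sum>\<tau>\<in>Y n. cup g f (Rt \<tau>) (inter_l xs))" using False by (simp add: boxtimes_u_def)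
    also have "\<dots> = (\<Sum>ks\<in>compositions n.
        f (length ks) (map (\<lambda>p. \<Sum>a\<in>Y (fst p - 1). F2 p a) (zip ks (blocks ks xs))))"
    proof (rule generic[where h = f and F = F2])
      show "\<And>m pre post y z. length pre + length post + 1 = m \<Longrightarrow>
        f m (pre @ (y+z) # post) = f m (pre @ y # post) + f m (pre @ z # post)" by (rule addf)
    next
      fix ls assume ls: "ls \<in> S n"
      then obtain l ls' where lsd: "ls = l # ls'" using S_nonempty False by blast
      have lx: "length xs = sum_list (map (Suc \<circ> nnodes) ls)" using ls len by (simp add: S_def)
      have "cup g f (Rt (mk ls)) (inter_l xs) = f (length ls) (cupargs g f (Rt (mk ls)) (inter_l xs))"
        using lsd by simp
      then show "cup g f (Rt (mk ls)) (inter_l xs) =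
          f (length ls) (map2 F2 (zip (map (Suc \<circ> nnodes) ls) (blocks (map (Suc \<circ> nnodes) ls) xs)) ls)"
        using cupargs_l[OF lx, of g f] by (simp add: F2_def)
    qed
    also have "\<dots> = mcomp f (mprod (boxtimes2 f g) mI) n xs"
      unfolding mcomp_def
    proof (rule sum.cong[OF refl])
      fix ks assume ks: "ks \<in> compositions n"
      have sk: "sum_list ks = length xs" using ks len by (simp add: compositions_def)
      have "map (\<lambda>p. \<Sum>a\<in>Y (fst p - 1). F2 p a) (zip ks (blocks ks xs)) =
            map (\<lambda>(k, ys). mprod (boxtimes2 f g) mI k ys) (zip ks (blocks ks xs))"
      proof (rule map_cong[OF refl])
        fix p assume p: "p \<in> set (zip ks (blocks ks xs))"
        obtain k ys where pk: "p = (k, ys)" by fastforce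
        have "k \<in> set ks" using p pk by (auto dest: set_zip_leftD)
        then have k1: "1 \<le> k" using ks by (auto simp: compositions_def)
        have ly: "length ys = k" using blocks_len[OF sk] p pk by blast
        have "mprod (boxtimes2 f g) mI k ys = boxtimes2 f g (k-1) (take (k-1) ys) * ys ! (k-1)"
          by (rule mprod_mI[OF k1 ly])
        also have "\<dots> = (\<Sum>a\<in>Y (k-1). cup f g (Node Leaf (Rt a)) (inter_l (take (k-1) ys) @ [1])) * ys ! (k-1)"
          using ly by (simp add: boxtimes2_eq)
        also have "\<dots> = (\<Sum>a\<in>Y (fst p - 1). F2 p a)"
          using pk by (simp add: F2_def sum_distrib_right)
        finally show "(\<Sum>a\<in>Y (fst p - 1). F2 p a) = (case p of (k, ys) \<Rightarrow> mprod (boxtimes2 f g) mI k ys)"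
          using pk by simp
      qed
      then show "f (length ks) (map (\<lambda>p. \<Sum>a\<in>Y (fst p - 1). F2 p a) (zip ks (blocks ks xs))) =
          f (length ks) (map (\<lambda>(k, ys). mprod (boxtimes2 f g) mI k ys) (zip ks (blocks ks xs)))" by (rule arg_cong)
    qed
    finally show ?thesis .
  qed
  show ?thesis using P1 P2 by blast
qed

end
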